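(* There is an absolute constant $C$ such that the following holds. Let $\mathcal S$ be a family of subsets of $[n]$, let $w_S\ge0$ for $S\in\mathcal S$, and suppose that $q(z)=\mathrm{sgn}(-\theta+\sum_{S\in\mathcal S}w_Sz_S)$ (for $z\in\{0,1\}^{\mathcal S}$) is a $(\theta,m)$-LTF with $\theta\ge2m>0$. Let $f\colon\{0,1\}^n\to\{0,1\}$ be $f(x)=\mathrm{sgn}\big(-\theta+\sum_{S\in\mathcal S}w_S\cdot\bigvee_{i\in S}x_i\big)$. Then $R^{lin}_{1/3}(f)\le C\left(\frac{\theta}{m}\right)^4\log^2\frac{\theta}{m}$.
   Context: $\mathrm{sgn}(y)=0$ for $y<0$ and $\mathrm{sgn}(y)=1$ for $y\ge0$. A $(\theta,m)$-LTF is a function $\mathrm{sgn}(-\theta+\sum_{j} w_jz_j)$ on a Boolean cube with real weights $w_j\ge0$ and real threshold $\theta$, whose margin $m>0$ satisfies $m\le\min_{z}|-\theta+\sum_jw_jz_j|$. For $S\subseteq[n]$, $\chi_S(x)=\sum_{i\in S}x_i\pmod2$. Exact randomized $\mathbb F_2$-sketch complexity: for $f\colon\mathbb F_2^n\to\mathbb R$ and $\delta\in[0,1]$, $R^{lin}_\delta(f)$ is the smallest integer $k$ such that there exists a probability distribution over $k$-tuples of subsets $\mathbf S_1,\dots,\mathbf S_k\subseteq[n]$ and a function $g\colon\mathbb F_2^k\to\mathbb R$ with $\Pr_{\mathbf S_1,\dots,\mathbf S_k}[g(\chi_{\mathbf S_1}(x),\dots,\chi_{\mathbf S_k}(x))=f(x)]\ge1-\delta$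 for every $x\in\mathbb F_2^n$. *)

theory Defs
  imports "HOL-Probability.Probability"
begin

definition sgn01 :: "real \<Rightarrow> real" where
  "sgn01 y = (if y \<ge> 0 then 1 else 0)"

(* F_2^n: a point x is represented by its support X \<subseteq> {0..<n};
   chi_S(x) = sum_{i in S} x_i mod 2 *)
definition chi :: "nat set \<Rightarrow> nat set \<Rightarrow> bool" where
  "chi S X = odd (card (S \<inter> X))"

definition sketchable :: "nat \<Rightarrow> real \<Rightarrow> (nat set \<Rightarrow> real) \<Rightarrow> nat \<Rightarrow> bool" where
  "sketchable n \<delta> f k \<longleftrightarrow>
     (\<exists>(D :: nat set list pmf) (g :: bool list \<Rightarrow> real).
        (\<forall>Ss \<in> set_pmf D. length Ss = k \<and> (\<forall>S \<in> set Ss. S \<subseteq> {0..<n})) \<and>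
        (\<forall>X. X \<subseteq> {0..<n} \<longrightarrow>
           measure_pmf.prob D {Ss. g (map (\<lambda>S. chi S X) Ss) = f X} \<ge> 1 - \<delta>))"

definition R_lin :: "nat \<Rightarrow> real \<Rightarrow> (nat set \<Rightarrow> real) \<Rightarrow> nat" where
  "R_lin n \<delta> f = (LEAST k. sketchable n \<delta> f k)"

(* q(z) = sgn(-theta + sum_{S in Fam} w_S z_S), z in {0,1}^Fam represented by
   Z = {S. z_S = 1} \<subseteq> Fam, is a (theta,m)-LTF: weights nonnegative, m > 0,
   and m \<le> |-theta + sum| for all z *)
definition is_LTF :: "nat set set \<Rightarrow> (nat set \<Rightarrow> real) \<Rightarrow> real \<Rightarrow> real \<Rightarrow> bool" where
  "is_LTF Fam w \<theta> m \<longleftrightarrow>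
     (\<forall>S\<in>Fam. w S \<ge> 0) \<and> m > 0 \<and>
     (\<forall>Z. Z \<subseteq> Fam \<longrightarrow> m \<le> \<bar>- \<theta> + (\<Sum>S\<in>Z. w S)\<bar>)"

end

theory Submission
  imports Defs
begin

lemma ln2_ge: "ln (2::real) \<ge> 1/2"
proof -
  have "exp (1/2::real) ^ 2 = exp 1" by (simp add: exp_of_nat_mult[symmetric] power2_eq_square exp_add[symmetric])
  also have "\<dots> \<le> 3" using exp_le by simp
  finally have "exp (1/2::real) ^ 2 < 2^2" by simp
  hence "exp (1/2::real) < 2" by (rule power_less_imp_less_base) simp
  hence "ln (exp (1/2::real)) < ln 2" by (subst ln_less_cancel_iff) auto
  thus ?thesis by simp
qed

lemma final_bound:
  fixes K :: real and N Cn t :: nat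
  assumes K: "K \<ge> 2" and N1: "real N < K + 1" and Cn: "real Cn \<le> (K+1) * real N + 1"
    and t: "real t \<le> log 2 (6 * real N) + 1" and N2: "N \<ge> 1"
  shows "real (Cn * (6 * N^2) * t) \<le> 2000 * K^4 * (ln K)^2"
proof -
  have Kp: "K > 0" using K by simp
  have lnK: "ln K \<ge> ln 2" using K by simp
  have lnKp: "ln K \<ge> 1/2" using lnK ln2_ge by linarith
  have KK: "K * K \<ge> 2 * K" using K by (intro mult_right_mono) auto
  have c1: "real Cn \<le> 3 * K^2"
  proof -
    have "(K+1) * real N \<le> (K+1)*(K+1)" using N1 K by (intro mult_left_mono) auto
    hence "(K+1) * real N \<le> K*K + 2*K + 1" by (simp add: algebra_simps)
    hence "real Cn \<le> 3*(K*K)" using Cn K KK by linarith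
    thus ?thesis by (simp add: power2_eq_square)
  qed
  have c2: "real (6 * N^2) \<le> 14 * K^2"
  proof -
    have "real N \<le> K + 1" using N1 by simp
    hence "real N ^ 2 \<le> (K+1)^2" by (intro power_mono) auto
    moreover have "(K+1)^2 \<le> 9/4 * K^2"
    proof -
      have "(K+1)^2 = K*K + 2*K + 1" by (simp add: power2_eq_square algebra_simps)
      moreover have "K*K + 2*K + 1 \<le> 9/4*(K*K)" using K KK by linarith
      ultimately show ?thesis by (simp add: power2_eq_square)
    qed
    ultimately have "real N ^ 2 \<le> 9/4 * K^2" by linarith
    moreover have "K^2 \<ge> 0" by simp
    moreover have "real (6 * N^2) = 6 * real N ^ 2" by simp
    ultimately show ?thesis by linarith
  qed
  have c3: "real t \<le> 24 * (ln K)^2"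
  proof -
    have "log 2 (6 * real N) + 1 = log 2 (12 * real N)"
    proof -
      have "log 2 (2 * (6 * real N)) = log 2 2 + log 2 (6 * real N)"
        using N2 by (intro log_mult_pos) auto
      thus ?thesis by simp
    qed
    also have "\<dots> \<le> log 2 (K^6)"
    proof -
      have "12 * real N \<le> 12 * (K+1)" using N1 by simp
      also have "\<dots> \<le> K^6"
      proof -
        have "K^5 \<ge> 2^5" using K by (intro power_mono) auto
        hence "K^5 * K \<ge> 32 * K" using K by (intro mult_right_mono) auto
        moreover have "K^6 = K^5 * K" by (simp add: power_Suc2[symmetric])
        ultimately have "K^6 \<ge> 32 * K" by simp
        moreover have "12*(K+1) = 12*K+12" by simp
        ultimately show ?thesis using K by linarith
      qed
      finally show ?thesis using N2 Kp by (subst log_le_cancel_iff) auto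
    qed
    also have "\<dots> = 6 * ln K / ln 2" using Kp by (simp add: log_def ln_realpow)
    also have "\<dots> \<le> 6 * ln K * 2"
    proof -
      have "1 / ln 2 \<le> (2::real)" using ln2_ge by (simp add: field_simps)
      moreover have "6 * ln K \<ge> 0" using lnKp by simp
      ultimately show ?thesis by (metis mult_left_mono times_divide_eq_right mult.right_neutral)
    qed
    also have "\<dots> \<le> 24 * (ln K)^2"
    proof -
      have "ln K * ln K \<ge> (1/2) * ln K" using lnKp by (intro mult_right_mono) auto
      thus ?thesis by (simp add: power2_eq_square)
    qed
    finally show ?thesis using t by linarith
  qed
  have "real (Cn * (6 * N^2) * t) = real Cn * real (6 * N^2) * real t" by simp
  also have "\<dots> \<le> (3 * K^2) * (14 * K^2) * (24 * (ln K)^2)"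
    by (intro mult_mono c1 c2 c3) auto
  also have "\<dots> = 1008 * (K^4 * (ln K)^2)" by (simp add: power2_eq_square power4_eq_xxxx algebra_simps)
  also have "\<dots> \<le> 2000 * K^4 * (ln K)^2"
  proof -
    have "K^4 * (ln K)^2 \<ge> 0" by simp
    thus ?thesis by simp
  qed
  finally show ?thesis .
qed

lemma half_even:
  assumes "E \<noteq> {}" "E \<subseteq> A" "finite A"
  shows "measure_pmf.prob (pmf_of_set (Pow A)) {R. even (card (R \<inter> E))} = 1/2"
proof -
  obtain e where e: "e \<in> E" using assms(1) by auto
  have fE: "finite E" using assms finite_subset by auto
  define \<phi> where "\<phi> R = (if e \<in> R then R - {e} else insert e R)" for R
  define Ev where "Ev = {R\<in>Pow A. even (card (R \<inter> E))}"
  define Od where "Od = {R\<in>Pow A. odd (card (R \<inter> E))}"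
  have invol: "\<phi> (\<phi> R) = R" for R unfolding \<phi>_def by auto
  have flip: "odd (card (\<phi> R \<inter> E)) \<longleftrightarrow> even (card (R \<inter> E))" for R
  proof (cases "e \<in> R")
    case True
    have "\<phi> R \<inter> E = (R \<inter> E) - {e}" using True unfolding \<phi>_def by auto
    moreover have "card (R \<inter> E) = Suc (card ((R \<inter> E) - {e}))" using True e fE
      using card.remove[of "R \<inter> E" e] True e fE by auto
    ultimately show ?thesis by (simp only:) simp
  next
    case False
    have "\<phi> R \<inter> E = insert e (R \<inter> E)" using False e unfolding \<phi>_def by auto
    moreover have "card (insert e (R \<inter> E)) = Suc (card (R \<inter> E))" using False fE by simp
    ultimately show ?thesis by simp
  qed
  have PA: "\<phi> R \<in> Pow A" if "R \<in> Pow A" for R using that e assms(2) unfolding \<phi>_def by auto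
  have "bij_betw \<phi> Ev Od"
  proof (rule bij_betwI[where g=\<phi>])
    show "\<phi> \<in> Ev \<rightarrow> Od" using PA flip unfolding Ev_def Od_def by blast
    show "\<phi> \<in> Od \<rightarrow> Ev" using PA flip invol unfolding Ev_def Od_def by (metis (no_types, lifting) Pi_I mem_Collect_eq)
  qed (use invol in auto)
  hence c1: "card Ev = card Od" by (rule bij_betw_same_card)
  have "Ev \<union> Od = Pow A" "Ev \<inter> Od = {}" unfolding Ev_def Od_def by auto
  hence "card Ev + card Od = card (Pow A)"
  proof -
    have "finite Ev" "finite Od" using assms(3) unfolding Ev_def Od_def by auto
    thus ?thesis using \<open>Ev \<union> Od = Pow A\<close> \<open>Ev \<inter> Od = {}\<close> card_Un_disjoint[of Ev Od] by simp
  qed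
  hence c2: "2 * card Ev = card (Pow A)" using c1 by simp
  have "measure_pmf.prob (pmf_of_set (Pow A)) {R. even (card (R \<inter> E))} = real (card Ev) / real (card (Pow A))"
  proof -
    have "Pow A \<inter> {R. even (card (R \<inter> E))} = Ev" unfolding Ev_def by blast
    thus ?thesis using assms(3) by (subst measure_pmf_of_set) auto
  qed
  also have "\<dots> = 1/2"
  proof -
    have "real (card (Pow A)) > 0" using assms(3) by (simp add: card_Pow)
    moreover have "2 * real (card Ev) = real (card (Pow A))" using c2 by (metis of_nat_mult of_nat_numeral)
    ultimately show ?thesis by (simp add: field_simps)
  qed
  finally show ?thesis .
qed


lemma pair_prob_bound:
  fixes p :: "'a pmf" and q :: "'b pmf"
  assumes "\<And>x. measure_pmf.prob q {y. (x,y) \<in> A} \<le> c" "c \<ge> 0"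
  shows "measure_pmf.prob (pair_pmf p q) A \<le> c"
proof -
  have "emeasure (measure_pmf (pair_pmf p q)) A
      = (\<integral>\<^sup>+ x. emeasure (measure_pmf (q \<bind> (\<lambda>y. return_pmf (x, y)))) A \<partial>measure_pmf p)"
    unfolding pair_pmf_def by (rule emeasure_bind_pmf)
  also have "\<dots> \<le> (\<integral>\<^sup>+ x. ennreal c \<partial>measure_pmf p)"
  proof (rule nn_integral_mono)
    fix x :: 'a
    have "q \<bind> (\<lambda>y. return_pmf (x, y)) = map_pmf (Pair x) q" by (simp add: map_pmf_def)
    hence "emeasure (measure_pmf (q \<bind> (\<lambda>y. return_pmf (x, y)))) A
       = ennreal (measure_pmf.prob q (Pair x -` A))"
      by (simp add: measure_pmf.emeasure_eq_measure measure_map_pmf)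
    also have "Pair x -` A = {y. (x,y) \<in> A}" by auto
    finally show "emeasure (measure_pmf (q \<bind> (\<lambda>y. return_pmf (x, y)))) A \<le> ennreal c"
      using assms(1) by (simp add: ennreal_leI)
  qed
  also have "\<dots> = ennreal c" by (simp add: measure_pmf.emeasure_space_1)
  finally show ?thesis using assms(2) by (simp add: measure_pmf.emeasure_eq_measure)
qed

lemma det_prob:
  assumes "finite J" "J0 \<subseteq> J" "finite A" "E \<noteq> {}" "E \<subseteq> A"
  shows "measure_pmf.prob (Pi_pmf J {} (\<lambda>_. pmf_of_set (Pow A))) {\<rho>. \<forall>j\<in>J0. even (card (\<rho> j \<inter> E))}
         = (1/2) ^ card J0"
proof -
  let ?P = "\<lambda>j. if j \<in> J0 then {R. even (card (R \<inter> E))} else UNIV"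
  have "{\<rho>. \<forall>j\<in>J0. even (card (\<rho> j \<inter> E))} = Pi J ?P"
    using assms(2) by (auto simp: Pi_def)
  hence "measure_pmf.prob (Pi_pmf J {} (\<lambda>_. pmf_of_set (Pow A))) {\<rho>. \<forall>j\<in>J0. even (card (\<rho> j \<inter> E))}
     = (\<Prod>j\<in>J. measure_pmf.prob (pmf_of_set (Pow A)) (?P j))"
    using assms(1) by (simp add: measure_Pi_pmf_Pi)
  also have "\<dots> = (\<Prod>j\<in>J. if j \<in> J0 then 1/2 else 1)"
    using half_even[OF assms(4,5,3)] by (intro prod.cong) auto
  also have "\<dots> = (1/2) ^ card J0"
    using assms(1,2) by (subst prod.If_cases) (auto simp: Int_absorb1 Int_def intro!: arg_cong[where f="\<lambda>k. (1/2::real)^k"] arg_cong[where f=card])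
  finally show ?thesis .
qed

lemma coll_prob:
  assumes "finite F" "S \<in> F" "S' \<in> F" "S \<noteq> S'" "(B::nat) > 0"
  shows "measure_pmf.prob (Pi_pmf F 0 (\<lambda>_. pmf_of_set {0..<B})) {h. h S mod B = h S' mod B} \<le> 1 / B"
proof -
  let ?M = "Pi_pmf F 0 (\<lambda>_. pmf_of_set {0..<B})"
  define P where "P b = Pi F (\<lambda>x. if x = S \<or> x = S' then {y. y mod B = b} else UNIV)" for b
  have sub: "{h. h S mod B = h S' mod B} \<subseteq> (\<Union>b\<in>{..<B}. P b)"
  proof
    fix h assume "h \<in> {h. h S mod B = h S' mod B}"
    hence "h \<in> P (h S mod B)" unfolding P_def by auto
    moreover have "h S mod B \<in> {..<B}" using assms(5) by simp
    ultimately show "h \<in> (\<Union>b\<in>{..<B}. P b)" by blast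
  qed
  have one: "measure_pmf.prob (pmf_of_set {0..<B}) {y. y mod B = b} = 1 / B" if "b < B" for b
  proof -
    have "{0..<B} \<inter> {y. y mod B = b} = {b}" using that by auto
    thus ?thesis using assms(5) by (subst measure_pmf_of_set) auto
  qed
  have each: "measure_pmf.prob ?M (P b) = (1/B)^2" if "b < B" for b
  proof -
    have "measure_pmf.prob ?M (P b) = (\<Prod>x\<in>F. measure_pmf.prob (pmf_of_set {0..<B})
             (if x = S \<or> x = S' then {y. y mod B = b} else UNIV))"
      unfolding P_def using assms(1) by (rule measure_Pi_pmf_Pi)
    also have "\<dots> = (\<Prod>x\<in>F. if x = S \<or> x = S' then 1/B else 1)"
      by (intro prod.cong) (auto simp: one that)
    also have "\<dots> = (1/B) ^ card (F \<inter> {x. x = S \<or> x = S'})"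
      using assms(1) by (subst prod.If_cases) auto
    also have "F \<inter> {x. x = S \<or> x = S'} = {S, S'}" using assms(2,3) by auto
    finally show ?thesis using assms(4) by (simp add: power2_eq_square)
  qed
  have "measure_pmf.prob ?M {h. h S mod B = h S' mod B} \<le> measure_pmf.prob ?M (\<Union>b\<in>{..<B}. P b)"
    using sub by (intro measure_pmf.finite_measure_mono) auto
  also have "\<dots> \<le> (\<Sum>b\<in>{..<B}. measure_pmf.prob ?M (P b))"
    by (intro measure_pmf.finite_measure_subadditive_finite) auto
  also have "\<dots> = (\<Sum>b\<in>{..<B}. (1/B)^2)" by (intro sum.cong) (auto simp: each)
  also have "\<dots> = 1 / B" using assms(5) by (simp add: power2_eq_square)
  finally show ?thesis .
qed

locale inst =
  fixes n :: nat and Fam :: "nat set set" and w :: "nat set \<Rightarrow> real" and \<theta> m :: real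
  assumes Fam: "Fam \<subseteq> Pow {0..<n}" and LTF: "is_LTF Fam w \<theta> m" and th: "\<theta> \<ge> 2*m" and mpos: "m > 0"
begin

definition "N = nat \<lceil>\<theta>/m\<rceil>"
definition "dl = m / real N"
definition "cl S = nat \<lfloor>min (w S) (\<theta>+m) / dl\<rfloor>"
definition "Cn = nat \<lfloor>(\<theta>+m)/dl\<rfloor> + 1"
definition "B = 6 * N^2"
definition "t = nat \<lceil>log 2 (6 * real N)\<rceil>"
definition "hit X = {S\<in>Fam. S \<inter> X \<noteq> {}}"
definition "U h c b = \<Union>{S\<in>Fam. cl S = c \<and> h S mod B = b}"
definition "DET h \<rho> X c b = (\<exists>j<t. odd (card (U h c b \<inter> \<rho> (c,b,j) \<inter> X)))"
definition "est h \<rho> X = (\<Sum>p\<in>{..<Cn}\<times>{..<B}. if DET h \<rho> X (fst p) (snd p) then real (fst p) * dl else 0)"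

lemma finFam: "finite Fam" using Fam finite_subset by (metis finite_Pow_iff finite_atLeastLessThan)
lemma wnn: "S \<in> Fam \<Longrightarrow> w S \<ge> 0" using LTF unfolding is_LTF_def by auto
lemma margin: "Z \<subseteq> Fam \<Longrightarrow> m \<le> \<bar>- \<theta> + (\<Sum>S\<in>Z. w S)\<bar>" using LTF unfolding is_LTF_def by auto

lemma N_ge: "real N \<ge> \<theta>/m" unfolding N_def by linarith
lemma N_ge2: "N \<ge> 2"
proof -
  have "\<theta>/m \<ge> 2" using th mpos by (simp add: field_simps)
  thus ?thesis using N_ge by linarith
qed
lemma dl_pos: "dl > 0" unfolding dl_def using mpos N_ge2 by simp
lemma Ndl: "real N * dl = m" unfolding dl_def using N_ge2 by simp
lemma B_pos: "B > 0" unfolding B_def using N_ge2 by simp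

lemma cl_le: "S \<in> Fam \<Longrightarrow> real (cl S) * dl \<le> min (w S) (\<theta>+m)"
proof -
  assume S: "S \<in> Fam"
  have y: "min (w S) (\<theta>+m) \<ge> 0" using wnn[OF S] th mpos by simp
  hence "real (cl S) = of_int \<lfloor>min (w S) (\<theta>+m) / dl\<rfloor>" unfolding cl_def using dl_pos by simp
  also have "\<dots> \<le> min (w S) (\<theta>+m) / dl" by simp
  finally show ?thesis using dl_pos by (simp add: field_simps)
qed

lemma cl_ge: "S \<in> Fam \<Longrightarrow> real (cl S) * dl > min (w S) (\<theta>+m) - dl"
proof -
  assume S: "S \<in> Fam"
  have y: "min (w S) (\<theta>+m) \<ge> 0" using wnn[OF S] th mpos by simp
  hence "real (cl S) = of_int \<lfloor>min (w S) (\<theta>+m) / dl\<rfloor>" unfolding cl_def using dl_pos by simp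
  also have "\<dots> > min (w S) (\<theta>+m) / dl - 1" by linarith
  finally show ?thesis using dl_pos by (simp add: field_simps)
qed

lemma cl_lt: "S \<in> Fam \<Longrightarrow> cl S < Cn"
proof -
  assume S: "S \<in> Fam"
  have "min (w S) (\<theta>+m) / dl \<le> (\<theta>+m)/dl" using dl_pos by (simp add: divide_right_mono)
  hence "\<lfloor>min (w S) (\<theta>+m) / dl\<rfloor> \<le> \<lfloor>(\<theta>+m)/dl\<rfloor>" by (rule floor_mono)
  thus ?thesis unfolding cl_def Cn_def by linarith
qed

lemma fsum: "(\<Sum>S\<in>Fam. w S * (if S \<inter> X \<noteq> {} then 1 else 0)) = (\<Sum>S\<in>hit X. w S)"
proof -
  have "(\<Sum>S\<in>Fam. w S * (if S \<inter> X \<noteq> {} then 1 else 0)) = (\<Sum>S\<in>Fam. if S \<inter> X \<noteq> {} then w S else 0)"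
    by (intro sum.cong) auto
  also have "\<dots> = (\<Sum>S\<in>hit X. w S)" unfolding hit_def using finFam by (simp add: sum.inter_filter)
  finally show ?thesis .
qed

lemma fin_hit: "finite (hit X)" unfolding hit_def using finFam by simp

lemma est_upper: "est h \<rho> X \<le> (\<Sum>S\<in>hit X. w S)"
proof -
  define P where "P = {p \<in> {..<Cn}\<times>{..<B}. DET h \<rho> X (fst p) (snd p)}"
  have finP: "finite P" unfolding P_def by auto
  have e: "est h \<rho> X = (\<Sum>p\<in>P. real (fst p) * dl)"
    unfolding est_def P_def by (simp add: sum.inter_filter)
  have ex: "\<exists>S. S \<in> Fam \<and> cl S = fst p \<and> h S mod B = snd p \<and> S \<inter> X \<noteq> {}" if "p \<in> P" for p
  proof -
    from that obtain j where "odd (card (U h (fst p) (snd p) \<inter> \<rho> (fst p, snd p, j) \<inter> X))"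
      unfolding P_def DET_def by auto
    hence "U h (fst p) (snd p) \<inter> \<rho> (fst p, snd p, j) \<inter> X \<noteq> {}" by (metis card.empty even_zero)
    then obtain x where "x \<in> U h (fst p) (snd p)" "x \<in> X" by blast
    then obtain S where "S \<in> Fam" "cl S = fst p" "h S mod B = snd p" "x \<in> S" unfolding U_def by auto
    thus ?thesis using \<open>x \<in> X\<close> by blast
  qed
  define \<sigma> where "\<sigma> p = (SOME S. S \<in> Fam \<and> cl S = fst p \<and> h S mod B = snd p \<and> S \<inter> X \<noteq> {})" for p
  have \<sigma>: "\<sigma> p \<in> Fam \<and> cl (\<sigma> p) = fst p \<and> h (\<sigma> p) mod B = snd p \<and> \<sigma> p \<inter> X \<noteq> {}" if "p \<in> P" for p
    unfolding \<sigma>_def using someI_ex[OF ex[OF that]] .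
  have inj: "inj_on \<sigma> P"
  proof (rule inj_onI)
    fix p q assume "p \<in> P" "q \<in> P" "\<sigma> p = \<sigma> q"
    thus "p = q" using \<sigma>[of p] \<sigma>[of q] by (metis prod.collapse)
  qed
  have "(\<Sum>p\<in>P. real (fst p) * dl) \<le> (\<Sum>p\<in>P. w (\<sigma> p))"
  proof (rule sum_mono)
    fix p assume "p \<in> P"
    with \<sigma>[OF this] cl_le[of "\<sigma> p"] show "real (fst p) * dl \<le> w (\<sigma> p)" by auto
  qed
  also have "\<dots> = (\<Sum>S\<in>\<sigma> ` P. w S)" using inj by (simp add: sum.reindex)
  also have "\<dots> \<le> (\<Sum>S\<in>hit X. w S)"
  proof (rule sum_mono2[OF fin_hit])
    show "\<sigma> ` P \<subseteq> hit X" using \<sigma> unfolding hit_def by auto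
    show "\<And>S. S \<in> hit X - \<sigma> ` P \<Longrightarrow> 0 \<le> w S" using wnn unfolding hit_def by auto
  qed
  finally show ?thesis using e by simp
qed

lemma est_lower:
  assumes T: "T \<subseteq> hit X" "card T \<le> N" "(\<Sum>S\<in>T. min (w S) (\<theta>+m)) \<ge> \<theta>+m"
    and inj: "inj_on (\<lambda>S. h S mod B) T" and det: "\<forall>S\<in>T. DET h \<rho> X (cl S) (h S mod B)"
  shows "est h \<rho> X \<ge> \<theta>"
proof -
  define P where "P = {p \<in> {..<Cn}\<times>{..<B}. DET h \<rho> X (fst p) (snd p)}"
  have finP: "finite P" unfolding P_def by auto
  have finT: "finite T" using T(1) fin_hit finite_subset by blast
  have TF: "S \<in> Fam" if "S \<in> T" for S using T(1) that unfolding hit_def by auto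
  have e: "est h \<rho> X = (\<Sum>p\<in>P. real (fst p) * dl)"
    unfolding est_def P_def by (simp add: sum.inter_filter)
  define \<pi> where "\<pi> S = (cl S, h S mod B)" for S
  have injp: "inj_on \<pi> T" using inj unfolding \<pi>_def inj_on_def by auto
  have sub: "\<pi> ` T \<subseteq> P" unfolding P_def \<pi>_def using det TF cl_lt B_pos by auto
  have "(\<Sum>S\<in>T. min (w S) (\<theta>+m)) - real N * dl \<le> (\<Sum>S\<in>T. min (w S) (\<theta>+m)) - real (card T) * dl"
    using T(2) dl_pos by (simp add: mult_right_mono)
  also have "\<dots> = (\<Sum>S\<in>T. min (w S) (\<theta>+m) - dl)" by (simp add: sum_subtractf)
  also have "\<dots> \<le> (\<Sum>S\<in>T. real (cl S) * dl)"
    by (intro sum_mono less_imp_le cl_ge TF)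
  also have "\<dots> = (\<Sum>p\<in>\<pi> ` T. real (fst p) * dl)" using sum.reindex[OF injp, of "\<lambda>p. real (fst p) * dl"] by (simp add: \<pi>_def)
  also have "\<dots> \<le> (\<Sum>p\<in>P. real (fst p) * dl)"
    by (rule sum_mono2[OF finP sub]) (use dl_pos in auto)
  finally show ?thesis using e T(3) Ndl by linarith
qed


lemma heavy_sum:
  assumes Z: "Z \<subseteq> Fam" and big: "(\<Sum>S\<in>Z. w S) \<ge> \<theta>"
  shows "(\<Sum>S\<in>{S\<in>Z. w S \<ge> 2*m}. w S) \<ge> \<theta> + m"
proof (rule ccontr)
  define Zh where "Zh = {S\<in>Z. w S \<ge> 2*m}"
  assume "\<not> ?thesis"
  hence lt: "(\<Sum>S\<in>Zh. w S) < \<theta> + m" unfolding Zh_def by simp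
  have ZhF: "Zh \<subseteq> Fam" using Z unfolding Zh_def by auto
  have finZ: "finite Z" using Z finFam finite_subset by blast
  have finZh: "finite Zh" using finZ unfolding Zh_def by simp
  have low: "(\<Sum>S\<in>Zh. w S) \<le> \<theta> - m" using margin[OF ZhF] lt by linarith
  have "finite L \<Longrightarrow> L \<subseteq> Z - Zh \<Longrightarrow> (\<Sum>S\<in>Zh \<union> L. w S) \<le> \<theta> - m" for L
  proof (induction L rule: finite_induct)
    case empty thus ?case using low by simp
  next
    case (insert x L)
    have x: "x \<in> Z" "x \<notin> Zh" "x \<notin> L" using insert by auto
    have wx: "w x < 2*m" using x unfolding Zh_def by auto
    have IH: "(\<Sum>S\<in>Zh \<union> L. w S) \<le> \<theta> - m" using insert by auto
    have eq: "Zh \<union> insert x L = insert x (Zh \<union> L)" by auto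
    have fin: "finite (Zh \<union> L)" using finZh insert by auto
    have s: "(\<Sum>S\<in>Zh \<union> insert x L. w S) = w x + (\<Sum>S\<in>Zh \<union> L. w S)"
      unfolding eq using fin x by simp
    have sub: "Zh \<union> insert x L \<subseteq> Fam" using ZhF insert Z by auto
    show ?case using margin[OF sub] s IH wx by linarith
  qed
  from this[of "Z - Zh"] have "(\<Sum>S\<in>Zh \<union> (Z - Zh). w S) \<le> \<theta> - m" using finZ by auto
  moreover have "Zh \<union> (Z - Zh) = Z" unfolding Zh_def by auto
  ultimately show False using big mpos by simp
qed

lemma exT:
  assumes big: "(\<Sum>S\<in>hit X. w S) \<ge> \<theta>"
  shows "\<exists>T. T \<subseteq> hit X \<and> card T \<le> N \<and> (\<Sum>S\<in>T. min (w S) (\<theta>+m)) \<ge> \<theta>+m"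
proof -
  define Zh where "Zh = {S\<in>hit X. w S \<ge> 2*m}"
  have hF: "hit X \<subseteq> Fam" unfolding hit_def by auto
  have hs: "(\<Sum>S\<in>Zh. w S) \<ge> \<theta> + m" unfolding Zh_def by (rule heavy_sum[OF hF big])
  have finZh: "finite Zh" using fin_hit unfolding Zh_def by simp
  have ZhF: "Zh \<subseteq> Fam" using hF unfolding Zh_def by auto
  have mnn: "min (w S) (\<theta>+m) \<ge> 0" if "S \<in> Fam" for S using wnn[OF that] th mpos by simp
  show ?thesis
  proof (cases "card Zh \<le> N")
    case True
    have "(\<Sum>S\<in>Zh. min (w S) (\<theta>+m)) \<ge> \<theta>+m"
    proof (cases "\<exists>S\<in>Zh. w S \<ge> \<theta>+m")
      case True
      then obtain S where S: "S \<in> Zh" "w S \<ge> \<theta>+m" by blast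
      have "min (w S) (\<theta>+m) \<le> (\<Sum>S\<in>Zh. min (w S) (\<theta>+m))"
        by (rule member_le_sum[OF S(1) _ finZh]) (use mnn ZhF in auto)
      thus ?thesis using S by simp
    next
      case False
      hence "(\<Sum>S\<in>Zh. min (w S) (\<theta>+m)) = (\<Sum>S\<in>Zh. w S)" by (intro sum.cong) auto
      thus ?thesis using hs by simp
    qed
    thus ?thesis using True unfolding Zh_def by (intro exI[of _ Zh]) (auto simp: Zh_def)
  next
    case False
    then obtain T where T: "T \<subseteq> Zh" "card T = N"
      by (metis nat_le_linear obtain_subset_with_card_n)
    have finT: "finite T" using T finZh finite_subset by blast
    have "(\<Sum>S\<in>T. 2*m) \<le> (\<Sum>S\<in>T. min (w S) (\<theta>+m))"
      by (intro sum_mono) (use T th mpos in \<open>auto simp: Zh_def\<close>)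
    moreover have "(\<Sum>S\<in>T. 2*m) = real N * (2*m)" using T by simp
    moreover have "real N * (2*m) \<ge> \<theta> + m"
    proof -
      have "real N * m \<ge> \<theta>" using N_ge mpos by (simp add: field_simps)
      moreover have "real N * (2*m) = 2 * (real N * m)" by simp
      ultimately show ?thesis using th mpos by linarith
    qed
    ultimately show ?thesis using T unfolding Zh_def by (intro exI[of _ T]) auto
  qed
qed


definition "Jset = {..<Cn} \<times> {..<B} \<times> {..<t}"
definition "idx = List.product [0..<Cn] (List.product [0..<B] [0..<t])"
definition "Q h \<rho> x = U h (fst x) (fst (snd x)) \<inter> \<rho> x"
definition "Hd = Pi_pmf Fam 0 (\<lambda>_. pmf_of_set {0..<B})"
definition "Rd = Pi_pmf Jset {} (\<lambda>_. pmf_of_set (Pow {0..<n}))"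
definition "D = map_pmf (\<lambda>(h,\<rho>). map (Q h \<rho>) idx) (pair_pmf Hd Rd)"
definition "gdec bs = sgn01 (- \<theta> + (\<Sum>p\<in>{..<Cn}\<times>{..<B}.
    if (\<exists>j. ((fst p, snd p, j), True) \<in> set (zip idx bs)) then real (fst p) * dl else 0))"
definition "fX X = sgn01 (- \<theta> + (\<Sum>S\<in>Fam. w S * (if S \<inter> X \<noteq> {} then 1 else 0)))"

lemma set_idx: "set idx = Jset" unfolding idx_def Jset_def by auto
lemma len_idx: "length idx = Cn * B * t" unfolding idx_def by simp

lemma zip_map_self: "set (zip xs (map F xs)) = (\<lambda>x. (x, F x)) ` set xs"
  by (induction xs) auto

lemma U_sub: "U h c b \<subseteq> {0..<n}" unfolding U_def using Fam by auto

lemma gdec_eq: "gdec (map (\<lambda>S. chi S X) (map (Q h \<rho>) idx)) = sgn01 (- \<theta> + est h \<rho> X)"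
proof -
  define F where "F x = chi (Q h \<rho> x) X" for x
  have e1: "map (\<lambda>S. chi S X) (map (Q h \<rho>) idx) = map F idx" unfolding F_def by simp
  have e2: "set (zip idx (map F idx)) = (\<lambda>x. (x, F x)) ` Jset" by (simp only: zip_map_self set_idx)
  have e3: "(\<exists>j. ((fst p, snd p, j), True) \<in> (\<lambda>x. (x, F x)) ` Jset) = DET h \<rho> X (fst p) (snd p)"
    if "p \<in> {..<Cn}\<times>{..<B}" for p
  proof -
    have "(\<exists>j. ((fst p, snd p, j), True) \<in> (\<lambda>x. (x, F x)) ` Jset) = (\<exists>j. (fst p, snd p, j) \<in> Jset \<and> F (fst p, snd p, j))"
      by blast
    also have "\<dots> = (\<exists>j<t. F (fst p, snd p, j))" using that unfolding Jset_def by auto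
    also have "\<dots> = DET h \<rho> X (fst p) (snd p)" unfolding DET_def F_def Q_def chi_def by simp
    finally show ?thesis .
  qed
  have "(\<Sum>p\<in>{..<Cn}\<times>{..<B}. if (\<exists>j. ((fst p, snd p, j), True) \<in> set (zip idx (map F idx))) then real (fst p) * dl else 0)
      = est h \<rho> X"
    unfolding est_def e2 by (rule sum.cong[OF refl]) (simp only: e3)
  thus ?thesis unfolding gdec_def e1 by simp
qed

lemma sgn01_cases: "sgn01 y = (if y \<ge> 0 then 1 else 0)" by (simp add: sgn01_def)

lemma two_t: "(1/2::real) ^ t \<le> 1 / (6 * real N)"
proof -
  have pos: "6 * real N > 0" using N_ge2 by simp
  have "log 2 (6 * real N) \<le> real t" unfolding t_def by linarith
  hence "2 powr (log 2 (6 * real N)) \<le> 2 powr real t" by (rule powr_mono) simp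
  hence "6 * real N \<le> 2 ^ t" using pos by (simp add: powr_realpow)
  thus ?thesis using pos by (simp add: field_simps power_one_over)
qed

lemma prob_success:
  assumes X: "X \<subseteq> {0..<n}"
  shows "measure_pmf.prob (pair_pmf Hd Rd) {hr. sgn01 (- \<theta> + est (fst hr) (snd hr) X) = fX X} \<ge> 2/3"
proof (cases "(\<Sum>S\<in>hit X. w S) < \<theta>")
  case True
  have "{hr. sgn01 (- \<theta> + est (fst hr) (snd hr) X) = fX X} = UNIV"
  proof -
    have "sgn01 (- \<theta> + est h \<rho> X) = fX X" for h \<rho>
      using est_upper[of h \<rho> X] True unfolding fX_def fsum sgn01_def by auto
    thus ?thesis by auto
  qed
  thus ?thesis by simp
next
  case False
  hence big: "(\<Sum>S\<in>hit X. w S) \<ge> \<theta>" by simp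
  have f1: "fX X = 1" unfolding fX_def fsum sgn01_def using big by simp
  obtain T where T: "T \<subseteq> hit X" "card T \<le> N" "(\<Sum>S\<in>T. min (w S) (\<theta>+m)) \<ge> \<theta>+m"
    using exT[OF big] by blast
  have finT: "finite T" using T(1) fin_hit finite_subset by blast
  have TF: "S \<in> Fam" if "S \<in> T" for S using T(1) that unfolding hit_def by auto
  define Pairs where "Pairs = {q \<in> T \<times> T. fst q \<noteq> snd q}"
  define Bad1 where "Bad1 = (\<Union>q\<in>Pairs. {h. h (fst q) mod B = h (snd q) mod B})"
  define E where "E S = {hr. \<not> DET (fst hr) (snd hr) X (cl S) (fst hr S mod B)}" for S
  define Good where "Good = {hr. sgn01 (- \<theta> + est (fst hr) (snd hr) X) = fX X}"
  have cover: "- Good \<subseteq> fst -` Bad1 \<union> (\<Union>S\<in>T. E S)"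
  proof
    fix hr assume hr: "hr \<in> - Good"
    show "hr \<in> fst -` Bad1 \<union> (\<Union>S\<in>T. E S)"
    proof (rule ccontr)
      assume "\<not> ?thesis"
      hence nb: "fst hr \<notin> Bad1" and nd: "\<forall>S\<in>T. DET (fst hr) (snd hr) X (cl S) (fst hr S mod B)"
        unfolding E_def by auto
      have inj: "inj_on (\<lambda>S. fst hr S mod B) T"
        using nb unfolding Bad1_def Pairs_def inj_on_def by auto
      have "est (fst hr) (snd hr) X \<ge> \<theta>" by (rule est_lower[OF T inj nd])
      hence "hr \<in> Good" unfolding Good_def f1 sgn01_def by simp
      thus False using hr by simp
    qed
  qed
  have p1: "measure_pmf.prob (pair_pmf Hd Rd) (fst -` Bad1) \<le> 1/6"
  proof -
    have "measure_pmf.prob (pair_pmf Hd Rd) (fst -` Bad1) = measure_pmf.prob (map_pmf fst (pair_pmf Hd Rd)) Bad1"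
      by (rule measure_map_pmf[symmetric])
    also have "\<dots> = measure_pmf.prob Hd Bad1" by (simp only: map_fst_pair_pmf)
    also have "\<dots> \<le> (\<Sum>q\<in>Pairs. measure_pmf.prob Hd {h. h (fst q) mod B = h (snd q) mod B})"
      unfolding Bad1_def using finT unfolding Pairs_def
      by (intro measure_pmf.finite_measure_subadditive_finite) auto
    also have "\<dots> \<le> (\<Sum>q\<in>Pairs. 1 / real B)"
      unfolding Hd_def
      by (intro sum_mono coll_prob finFam B_pos) (auto simp: Pairs_def intro: TF)
    also have "\<dots> \<le> real (card (T \<times> T)) / real B"
    proof -
      have "card Pairs \<le> card (T \<times> T)" unfolding Pairs_def using finT by (intro card_mono) auto
      thus ?thesis using B_pos by (simp add: divide_right_mono)
    qed
    also have "\<dots> \<le> real (N^2) / real B"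
    proof -
      have "card (T \<times> T) \<le> N^2" using T(2) by (simp add: card_cartesian_product power2_eq_square mult_le_mono)
      thus ?thesis using B_pos by (simp add: divide_right_mono)
    qed
    also have "\<dots> = 1/6" unfolding B_def using N_ge2 by simp
    finally show ?thesis .
  qed
  have p2: "measure_pmf.prob (pair_pmf Hd Rd) (E S) \<le> (1/2)^t" if S: "S \<in> T" for S
  proof (rule pair_prob_bound)
    fix h :: "nat set \<Rightarrow> nat"
    let ?c = "cl S" and ?b = "h S mod B"
    define J0 where "J0 = (\<lambda>j. (?c, ?b, j)) ` {..<t}"
    define EE where "EE = U h ?c ?b \<inter> X"
    have "{\<rho>. (h, \<rho>) \<in> E S} = {\<rho>. \<forall>j\<in>J0. even (card (\<rho> j \<inter> EE))}"
    proof -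
      have cc: "card (U h ?c ?b \<inter> \<rho> (?c, ?b, j) \<inter> X) = card (\<rho> (?c, ?b, j) \<inter> EE)"
        for \<rho> :: "nat \<times> nat \<times> nat \<Rightarrow> nat set" and j :: nat
        unfolding EE_def by (intro arg_cong[where f=card]) blast
      show ?thesis unfolding E_def DET_def J0_def by (auto simp: cc)
    qed
    also have "measure_pmf.prob Rd \<dots> = (1/2) ^ card J0"
      unfolding Rd_def
    proof (rule det_prob)
      show "finite Jset" unfolding Jset_def by simp
      show "J0 \<subseteq> Jset" unfolding J0_def Jset_def using cl_lt[OF TF[OF S]] B_pos by auto
      show "finite {0..<n}" by simp
      show "EE \<subseteq> {0..<n}" unfolding EE_def using U_sub by auto
      have "S \<subseteq> U h ?c ?b" unfolding U_def using TF[OF S] by auto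
      moreover have "S \<inter> X \<noteq> {}" using S T(1) unfolding hit_def by auto
      ultimately show "EE \<noteq> {}" unfolding EE_def by blast
    qed
    also have "card J0 = t" unfolding J0_def by (simp add: card_image inj_on_def)
    finally show "measure_pmf.prob Rd {\<rho>. (h, \<rho>) \<in> E S} \<le> (1/2)^t" by simp
  qed simp
  have p3: "measure_pmf.prob (pair_pmf Hd Rd) (\<Union>S\<in>T. E S) \<le> 1/6"
  proof -
    have "measure_pmf.prob (pair_pmf Hd Rd) (\<Union>S\<in>T. E S) \<le> (\<Sum>S\<in>T. measure_pmf.prob (pair_pmf Hd Rd) (E S))"
      using finT by (intro measure_pmf.finite_measure_subadditive_finite) auto
    also have "\<dots> \<le> (\<Sum>S\<in>T. 1 / (6 * real N))"
      by (intro sum_mono order.trans[OF p2 two_t])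
    also have "\<dots> \<le> real N * (1 / (6 * real N))" using T(2) N_ge2 by (simp add: divide_right_mono)
    also have "\<dots> = 1/6" using N_ge2 by simp
    finally show ?thesis .
  qed
  have "measure_pmf.prob (pair_pmf Hd Rd) (- Good) \<le> measure_pmf.prob (pair_pmf Hd Rd) (fst -` Bad1 \<union> (\<Union>S\<in>T. E S))"
    using cover by (intro measure_pmf.finite_measure_mono) auto
  also have "\<dots> \<le> measure_pmf.prob (pair_pmf Hd Rd) (fst -` Bad1) + measure_pmf.prob (pair_pmf Hd Rd) (\<Union>S\<in>T. E S)"
    by (rule measure_Un_le) auto
  also have "\<dots> \<le> 1/3" using p1 p3 by simp
  finally have "measure_pmf.prob (pair_pmf Hd Rd) (- Good) \<le> 1/3" .
  moreover have "measure_pmf.prob (pair_pmf Hd Rd) (- Good) = 1 - measure_pmf.prob (pair_pmf Hd Rd) Good"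
    using measure_pmf.prob_compl[of Good "pair_pmf Hd Rd"] by (simp add: Compl_eq_Diff_UNIV)
  ultimately show ?thesis unfolding Good_def by simp
qed

lemma sketch: "sketchable n (1/3) fX (Cn * B * t)"
proof -
  have A: "\<forall>Ss \<in> set_pmf D. length Ss = Cn * B * t \<and> (\<forall>S \<in> set Ss. S \<subseteq> {0..<n})"
  proof
    fix Ss assume "Ss \<in> set_pmf D"
    then obtain h \<rho> where Ss: "Ss = map (Q h \<rho>) idx" unfolding D_def by auto
    show "length Ss = Cn * B * t \<and> (\<forall>S \<in> set Ss. S \<subseteq> {0..<n})"
      using Ss len_idx U_sub unfolding Q_def by auto
  qed
  have B: "\<forall>X. X \<subseteq> {0..<n} \<longrightarrow> measure_pmf.prob D {Ss. gdec (map (\<lambda>S. chi S X) Ss) = fX X} \<ge> 1 - 1/3"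
  proof (intro allI impI)
    fix X :: "nat set" assume X: "X \<subseteq> {0..<n}"
    have "measure_pmf.prob D {Ss. gdec (map (\<lambda>S. chi S X) Ss) = fX X}
        = measure_pmf.prob (pair_pmf Hd Rd) {hr. sgn01 (- \<theta> + est (fst hr) (snd hr) X) = fX X}"
      unfolding D_def measure_map_pmf
      by (intro arg_cong[where f="measure_pmf.prob (pair_pmf Hd Rd)"]) (auto simp: gdec_eq[simplified])
    thus "1 - 1/3 \<le> measure_pmf.prob D {Ss. gdec (map (\<lambda>S. chi S X) Ss) = fX X}"
      using prob_success[OF X] by simp
  qed
  show ?thesis unfolding sketchable_def using A B by blast
qed


lemma size_bound: "real (Cn * B * t) \<le> 2000 * (\<theta>/m)^4 * (ln (\<theta>/m))^2"
proof -
  define K where "K = \<theta>/m"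
  have K2: "K \<ge> 2" unfolding K_def using th mpos by (simp add: field_simps)
  have N1: "real N < K + 1" unfolding N_def K_def using K2 K_def by linarith
  have Cn: "real Cn \<le> (K+1) * real N + 1"
  proof -
    have "(\<theta>+m)/dl = (K+1) * real N" unfolding dl_def K_def using mpos N_ge2 by (simp add: field_simps)
    moreover have "(\<theta>+m)/dl \<ge> 0" using th mpos dl_pos by simp
    ultimately show ?thesis unfolding Cn_def by linarith
  qed
  have t: "real t \<le> log 2 (6 * real N) + 1"
  proof -
    have "log 2 (6 * real N) \<ge> 0" using N_ge2 by simp
    thus ?thesis unfolding t_def by linarith
  qed
  have N2: "N \<ge> 1" using N_ge2 by simp
  have "real (Cn * (6 * N^2) * t) \<le> 2000 * K^4 * (ln K)^2" by (rule final_bound[OF K2 N1 Cn t N2])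
  thus ?thesis unfolding B_def K_def .
qed

end

theorem mainTheorem10:
  shows "\<exists>C::real. \<forall>(n::nat) (Fam::nat set set) (w::nat set \<Rightarrow> real) (\<theta>::real) (m::real).
     Fam \<subseteq> Pow {0..<n} \<and> (\<forall>S\<in>Fam. w S \<ge> 0) \<and> is_LTF Fam w \<theta> m \<and> \<theta> \<ge> 2 * m \<and> m > 0
     \<longrightarrow> real (R_lin n (1/3)
            (\<lambda>X. sgn01 (- \<theta> + (\<Sum>S\<in>Fam. w S * (if S \<inter> X \<noteq> {} then 1 else 0)))))
         \<le> C * (\<theta> / m) ^ 4 * (ln (\<theta> / m)) ^ 2"
proof (intro exI[of _ 2000] allI impI, elim conjE)
  fix n :: nat and Fam :: "nat set set" and w :: "nat set \<Rightarrow> real" and \<theta> m :: real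
  assume a: "Fam \<subseteq> Pow {0..<n}" "\<forall>S\<in>Fam. w S \<ge> 0" "is_LTF Fam w \<theta> m" "\<theta> \<ge> 2 * m" "m > 0"
  interpret inst n Fam w \<theta> m using a by unfold_locales auto
  have eq: "(\<lambda>X. sgn01 (- \<theta> + (\<Sum>S\<in>Fam. w S * (if S \<inter> X \<noteq> {} then 1 else 0)))) = fX"
    by (rule ext) (simp add: fX_def)
  have "R_lin n (1/3) fX \<le> Cn * B * t" unfolding R_lin_def by (rule Least_le) (rule sketch)
  hence "real (R_lin n (1/3) fX) \<le> real (Cn * B * t)" by linarith
  also have "\<dots> \<le> 2000 * (\<theta>/m)^4 * (ln (\<theta>/m))^2" by (rule size_bound)
  finally show "real (R_lin n (1/3) (\<lambda>X. sgn01 (- \<theta> + (\<Sum>S\<in>Fam. w S * (if S \<inter> X \<noteq> {} then 1 else 0)))))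
         \<le> 2000 * (\<theta> / m) ^ 4 * (ln (\<theta> / m)) ^ 2" unfolding eq .
qed

end
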